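(* Consider the system $\dot X=(1-Y)X$, $\dot Y=(X-U)Y$ on $\{X>0,Y>0\}$ and the function $$V(X,Y)=\Psi(1/X)+\Psi(Y/X).$$ Under the feedback $U=Y+\frac{Y-X}{Y}$, along closed-loop solutions $$\dot V=-\frac{(X-1)^2}{X}-\frac{(Y-X)^2}{XY},$$ which is negative definite on $\{X>0,Y>0\}$ with respect to $(1,1)$. Moreover, $V$ is positive definite with respect to $(1,1)$ and radially unbounded on the quadrant.
   Context: $\Psi(S)=S-1-\ln S$ for $S>0$. Radially unbounded on the quadrant means $V\to\infty$ as $(X,Y)$ approaches $\{X=0\}\cup\{Y=0\}$ or as $X+Y\to\infty$. *)

theory Defs
  imports Complex_Main
begin

definition Psi :: "real \<Rightarrow> real" where
  "Psi S = S - 1 - ln S"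

definition Vfun :: "real \<Rightarrow> real \<Rightarrow> real" where
  "Vfun X Y = Psi (1 / X) + Psi (Y / X)"

definition Ufb :: "real \<Rightarrow> real \<Rightarrow> real" where
  "Ufb X Y = Y + (Y - X) / Y"

definition Vdot :: "real \<Rightarrow> real \<Rightarrow> real" where
  "Vdot X Y = - ((X - 1)^2 / X) - (Y - X)^2 / (X * Y)"

end

theory Submission
  imports Defs
begin

lemma Psi_ge0: "s > 0 \<Longrightarrow> Psi s \<ge> 0"
  using ln_le_minus_one[of s] by (simp add: Psi_def)

lemma Psi_gt0: "s > 0 \<Longrightarrow> s \<noteq> 1 \<Longrightarrow> Psi s > 0"
  using ln_le_minus_one[of s] ln_eq_minus_one[of s] by (force simp: Psi_def)

lemma Psi_half: "s > 0 \<Longrightarrow> Psi s \<ge> s/2 - ln 2"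
proof -
  assume s: "s > 0"
  have "ln (s/2) \<le> s/2 - 1" using ln_le_minus_one[of "s/2"] s by simp
  moreover have "ln (s/2) = ln s - ln 2" using s by (simp add: ln_div)
  ultimately show ?thesis using ln_2_less_1 by (simp add: Psi_def)
qed

lemma Vfun_alt: "X > 0 \<Longrightarrow> Y > 0 \<Longrightarrow> Vfun X Y = 1/X + Y/X - 2 + 2 * ln X - ln Y"
  by (simp add: Vfun_def Psi_def ln_div)

lemma deriv_eq:
  fixes a b :: real assumes a: "a > 0" and b: "b > 0"
  shows "(0 * a - 1 * ((1 - b) * a)) / (a * a) - 0 -
     1 / (1 / a) * ((0 * a - 1 * ((1 - b) * a)) / (a * a)) +
     (((a - Ufb a b) * b * a - b * ((1 - b) * a)) / (a * a) - 0 -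
      1 / (b / a) * (((a - Ufb a b) * b * a - b * ((1 - b) * a)) / (a * a))) = Vdot a b"
  using a b unfolding Vdot_def Ufb_def
  by (simp add: field_simps power2_eq_square)

lemma deriv_part:
  fixes x y :: "real \<Rightarrow> real"
  assumes px: "x t > 0" and py: "y t > 0"
    and dx: "(x has_real_derivative ((1 - y t) * x t)) (at t)"
    and dy: "(y has_real_derivative ((x t - Ufb (x t) (y t)) * y t)) (at t)"
  shows "((\<lambda>s. Vfun (x s) (y s)) has_real_derivative Vdot (x t) (y t)) (at t)"
  unfolding Vfun_def Psi_def
  apply (rule DERIV_cong)
  apply ((rule dx dy refl | rule derivative_eq_intros | use px py in simp)+)[1]
  using deriv_eq px py by blast
lemma Vdot_neg: "X > 0 \<Longrightarrow> Y > 0 \<Longrightarrow> (X, Y) \<noteq> (1, 1) \<Longrightarrow> Vdot X Y < 0"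
proof -
  assume X: "X > 0" and Y: "Y > 0" and ne: "(X, Y) \<noteq> (1, 1)"
  have a: "(X - 1)^2 / X \<ge> 0" "(Y - X)^2 / (X * Y) \<ge> 0" using X Y by auto
  show ?thesis
  proof (cases "X = 1")
    case True
    then have "Y \<noteq> X" using ne by auto
    then have "(Y - X)^2 / (X * Y) > 0" using X Y by auto
    then show ?thesis using a by (simp add: Vdot_def)
  next
    case False
    then have "(X - 1)^2 / X > 0" using X by auto
    then show ?thesis using a by (simp add: Vdot_def)
  qed
qed

lemma Vfun_pos: "X > 0 \<Longrightarrow> Y > 0 \<Longrightarrow> (X, Y) \<noteq> (1, 1) \<Longrightarrow> Vfun X Y > 0"
proof -
  assume X: "X > 0" and Y: "Y > 0" and ne: "(X, Y) \<noteq> (1, 1)"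
  have a: "Psi (1/X) \<ge> 0" "Psi (Y/X) \<ge> 0" using X Y Psi_ge0 by auto
  show ?thesis
  proof (cases "X = 1")
    case True
    then have "Y / X \<noteq> 1" using ne by auto
    then have "Psi (Y/X) > 0" using X Y Psi_gt0 by auto
    then show ?thesis using a by (simp add: Vfun_def)
  next
    case False
    then have "1 / X \<noteq> 1" by auto
    then have "Psi (1/X) > 0" using X Psi_gt0 by auto
    then show ?thesis using a by (simp add: Vfun_def)
  qed
qed

lemma Vfun_unb: "\<exists>\<delta>>0. \<exists>R::real. \<forall>X Y::real. X > 0 \<longrightarrow> Y > 0 \<longrightarrow>
          (X < \<delta> \<or> Y < \<delta> \<or> X + Y > R) \<longrightarrow> Vfun X Y > M"
proof -
  define \<delta> where "\<delta> = min (1 / (2 * (\<bar>M\<bar> + 2))) (exp (-(M+2)))"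
  define R where "R = 2 * exp (M + 2)"
  have dpos: "\<delta> > 0" unfolding \<delta>_def by auto
  have R2: "ln (R/2) = M + 2" unfolding R_def by simp
  have Rpos: "R > 0" unfolding R_def by simp
  have "Vfun X Y > M" if X: "X > 0" and Y: "Y > 0" and c: "X < \<delta> \<or> Y < \<delta> \<or> X + Y > R" for X Y
  proof -
    have p1: "Psi (1/X) \<ge> 0" "Psi (Y/X) \<ge> 0" using X Y Psi_ge0 by auto
    have V: "Vfun X Y = 1/X + Y/X - 2 + 2 * ln X - ln Y" using Vfun_alt X Y by simp
    consider "X < \<delta>" | "Y < \<delta>" | "X > R/2" | "Y > R/2" using c by linarith
    then show ?thesis
    proof cases
      case 1
      have h1: "Psi (1/X) \<ge> (1/X)/2 - ln 2" using Psi_half[of "1/X"] X by simp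
      have h2: "X < 1 / (2 * (\<bar>M\<bar> + 2))" using 1 unfolding \<delta>_def by simp
      have h3: "2 * (\<bar>M\<bar> + 2) > 0" by simp
      have k: "X * (2 * (\<bar>M\<bar> + 2)) < 1" using h2 h3 by (simp add: less_divide_eq)
      have "1/X > 2 * (\<bar>M\<bar> + 2)" using X k by (simp add: field_simps)
      then have "(1/X)/2 > \<bar>M\<bar> + 2" by simp
      then have "Psi (1/X) > M" using h1 ln_2_less_1 abs_ge_self[of M] by linarith
      then show ?thesis using p1 by (simp add: Vfun_def)
    next
      case 2
      have "ln (1/(2*X)) \<le> 1/(2*X) - 1" using ln_le_minus_one[of "1/(2*X)"] X by simp
      moreover have "ln (1/(2*X)) = - ln 2 - ln X" using X by (simp add: ln_div ln_mult)
      ultimately have "1/X + 2 * ln X \<ge> 2 - 2 * ln 2" by (simp add: field_simps)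
      then have "1/X + 2 * ln X > 0" using ln_2_less_1 by linarith
      moreover have "ln Y < ln \<delta>" using 2 Y by simp
      moreover have "ln \<delta> \<le> -(M+2)" unfolding \<delta>_def
        by (metis dpos \<delta>_def ln_exp ln_le_cancel_iff min.cobounded2 exp_gt_zero)
      moreover have "Y / X \<ge> 0" using X Y by simp
      ultimately show ?thesis using V by linarith
    next
      case 3
      have "ln (1/X) \<le> 1/X - 1" using ln_le_minus_one[of "1/X"] X by simp
      then have "Psi (1/X) \<ge> ln X - 1" using X by (simp add: Psi_def ln_div)
      moreover have "ln X > ln (R/2)" using 3 Rpos by simp
      ultimately show ?thesis using p1 R2 by (simp add: Vfun_def)
    next
      case 4
      have "ln (Y/(2*X)) \<le> Y/(2*X) - 1" using ln_le_minus_one[of "Y/(2*X)"] X Y by simp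
      moreover have "ln (Y/(2*X)) = ln Y - ln 2 - ln X" using X Y by (simp add: ln_div ln_mult)
      ultimately have "Y/X \<ge> 2 * ln Y - 2 * ln 2 - 2 * ln X + 2" by (simp add: field_simps)
      moreover have "1/X > 0" using X by simp
      moreover have "ln Y > ln (R/2)" using 4 Rpos by simp
      ultimately show ?thesis using V R2 ln_2_less_1 by linarith
    qed
  qed
  then show ?thesis using dpos by blast
qed

theorem mainTheorem5:
  shows
   "(\<forall>(x::real\<Rightarrow>real) (y::real\<Rightarrow>real) (t::real).
        x t > 0 \<longrightarrow> y t > 0 \<longrightarrow>
        (x has_real_derivative ((1 - y t) * x t)) (at t) \<longrightarrow>
        (y has_real_derivative ((x t - Ufb (x t) (y t)) * y t)) (at t) \<longrightarrow>
        ((\<lambda>s. Vfun (x s) (y s)) has_real_derivative Vdot (x t) (y t)) (at t))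
    \<and> Vdot 1 1 = 0
    \<and> (\<forall>X Y::real. X > 0 \<longrightarrow> Y > 0 \<longrightarrow> (X, Y) \<noteq> (1, 1) \<longrightarrow> Vdot X Y < 0)
    \<and> Vfun 1 1 = 0
    \<and> (\<forall>X Y::real. X > 0 \<longrightarrow> Y > 0 \<longrightarrow> (X, Y) \<noteq> (1, 1) \<longrightarrow> Vfun X Y > 0)
    \<and> (\<forall>M::real. \<exists>\<delta>>0. \<exists>R::real. \<forall>X Y::real. X > 0 \<longrightarrow> Y > 0 \<longrightarrow>
          (X < \<delta> \<or> Y < \<delta> \<or> X + Y > R) \<longrightarrow> Vfun X Y > M)"
proof (intro conjI)
  show "Vdot 1 1 = 0" by (simp add: Vdot_def)
  show "Vfun 1 1 = 0" by (simp add: Vfun_def Psi_def)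
qed (use deriv_part Vdot_neg Vfun_pos Vfun_unb in blast)+

end
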